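(* Let $(c_n)_{n\in\mathbb{N}}$ be a sequence of positive numbers such that either $c_n=n$ for all $n$, or $\lim_{n\to\infty}c_n/n=\infty$. For $\gamma>0$ define $$Y^{(\le\gamma)}_{[nt]}:=\sum_{k=0}^{[nt]}\mathbf{1}_{\{J_k\le e^{\gamma c_n}\}}\sum_{i=1}^{J_k}X_{i,k}([nt]-k),\qquad t\ge0,$$ and let $m(r):=\mu^{-r}\wedge1$ for $r\in\mathbb{N}_0$ if $c_n=n$, and $m(r):=1$ for $r\in\mathbb{N}_0$ if $c_n/n\to\infty$. Fix $T>0$ and $\gamma>0$. Then for every $\delta>0$, $$\sum_{n\ge1}\mathbb{P}\Big\{\sup_{0\le t\le T}\frac1{c_n}\log^+\Big(m([nt])\,Y^{(\le\gamma)}_{[nt]}\Big)>\gamma+\delta\Big\}<\infty.$$ (No assumption on the tail of $J$ is needed.)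
   Context: $\mathbb{N}_0=\mathbb{N}\cup\{0\}$. The families $(X_{i,k})_{i\in\mathbb{N},k\in\mathbb{N}_0}$ and $(J_k)_{k\in\mathbb{N}_0}$ are mutually independent, each consisting of i.i.d. random objects; each $X_{i,k}=(X_{i,k}(n))_{n\in\mathbb{N}_0}$ is a Galton–Watson process with $X_{i,k}(0)=1$ and offspring mean $\mu\in(0,\infty)$; each $J_k$ is a nonnegative integer-valued random variable. $\log^+x=\max(\log x,0)$, $[\cdot]$ is the integer part, $a\wedge b=\min(a,b)$. *)

theory Defs
  imports "HOL-Probability.Probability"
begin

text \<open>Galton--Watson process driven by an offspring array:
  xi n j = number of children of the j-th individual of generation n.
  GW xi 0 = 1, GW xi (n+1) = sum of xi n j over j < GW xi n.\<close>
fun GW :: "(nat \<Rightarrow> nat \<Rightarrow> 'a \<Rightarrow> nat) \<Rightarrow> nat \<Rightarrow> 'a \<Rightarrow> nat" where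
  "GW xi 0 \<omega> = 1"
| "GW xi (Suc n) \<omega> = (\<Sum>j<GW xi n \<omega>. xi n j \<omega>)"

definition logp :: "real \<Rightarrow> real" where
  "logp x = (if x \<le> 1 then 0 else ln x)"

text \<open>Truncated sum Y^{(<= gamma)}_N at scale n (N plays the role of [nt]).
  X i k = GW xi_{i,k}, offspring array xi i k n j.\<close>
definition Ytrunc ::
  "(nat \<Rightarrow> nat \<Rightarrow> nat \<Rightarrow> nat \<Rightarrow> 'a \<Rightarrow> nat) \<Rightarrow> (nat \<Rightarrow> 'a \<Rightarrow> nat) \<Rightarrow> real \<Rightarrow> real \<Rightarrow> nat \<Rightarrow> 'a \<Rightarrow> real" where
  "Ytrunc xi J \<gamma> cn N \<omega> =
     (\<Sum>k\<in>{0..N}. if real (J k \<omega>) \<le> exp (\<gamma> * cn)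
                   then real (\<Sum>i\<in>{1..J k \<omega>}. GW (xi i k) (N - k) \<omega>) else 0)"

definition mfun :: "real \<Rightarrow> (nat \<Rightarrow> real) \<Rightarrow> nat \<Rightarrow> real" where
  "mfun \<mu> c r = (if (\<forall>n\<ge>1. c n = real n) then min (inverse \<mu> ^ r) 1 else 1)"

end

theory Submission
  imports Defs "HOL-Real_Asymp.Real_Asymp"
begin


lemma GW_cong: "(\<And>m j. m < n \<Longrightarrow> f m j u = g m j v) \<Longrightarrow> GW f n u = GW g n v"
  by (induction n) auto

definition gwP :: "nat \<Rightarrow> nat \<Rightarrow> nat \<Rightarrow> ((nat \<times> nat \<times> nat \<times> nat) + nat \<Rightarrow> nat) \<Rightarrow> nat" where
  "gwP i k n x = GW (\<lambda>m j (_::unit). x (Inl (i,k,m,j))) n ()"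

lemma sum_meas:
  assumes "\<And>j. (\<lambda>x. f j x) \<in> measurable N (count_space UNIV)"
  shows "(\<lambda>x. (\<Sum>j<g. f j x :: nat)) \<in> measurable N (count_space UNIV)"
  using assms by measurable

lemma gwP_meas:
  assumes "\<And>m j. m < n \<Longrightarrow> Inl (i,k,m,j) \<in> K"
  shows "gwP i k n \<in> measurable (PiM K (\<lambda>_. count_space UNIV)) (count_space UNIV)"
  using assms
proof (induction n)
  case 0 then show ?case by (simp add: gwP_def)
next
  case (Suc n)
  have eq: "gwP i k (Suc n) = (\<lambda>x. (\<lambda>g x. \<Sum>j<g. x (Inl (i,k,n,j))) (gwP i k n x) x)"
    by (simp add: gwP_def fun_eq_iff)
  have "(\<lambda>x. (\<lambda>g x. \<Sum>j<g. x (Inl (i,k,n,j))) (gwP i k n x) x) \<in> measurable (PiM K (\<lambda>_. count_space UNIV)) (count_space UNIV)"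
    apply (rule measurable_compose_countable[where f="\<lambda>g x. \<Sum>j<g. x (Inl (i,k,n,j))" and g="gwP i k n"])
     apply (rule sum_meas)
     apply (rule measurable_component_singleton)
    using Suc by auto
  then show ?case using eq by simp
qed


abbreviation Xv :: "(nat \<Rightarrow> nat \<Rightarrow> nat \<Rightarrow> nat \<Rightarrow> 'a \<Rightarrow> nat) \<Rightarrow> (nat \<Rightarrow> 'a \<Rightarrow> nat) \<Rightarrow> (nat \<times> nat \<times> nat \<times> nat) + nat \<Rightarrow> 'a \<Rightarrow> nat" where
  "Xv xi J \<equiv> (\<lambda>x \<omega>. case x of Inl (i, k, n, j) \<Rightarrow> xi i k n j \<omega> | Inr k \<Rightarrow> J k \<omega>)"

lemma (in prob_space) indep_var_nn_integral:
  fixes X1 X2 :: "'a \<Rightarrow> ennreal"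
  assumes "indep_var borel X1 borel X2"
  shows "(\<integral>\<^sup>+\<omega>. X1 \<omega> * X2 \<omega> \<partial>M) = (\<integral>\<^sup>+\<omega>. X1 \<omega> \<partial>M) * (\<integral>\<^sup>+\<omega>. X2 \<omega> \<partial>M)"
proof -
  have *: "(\<lambda>\<omega>. X1 \<omega> * X2 \<omega>) = (\<lambda>\<omega>. \<Prod>i\<in>UNIV. (case_bool X1 X2 i \<omega>))"
    by (simp add: UNIV_bool mult.commute)
  have **: "(\<lambda> _. borel) = case_bool borel borel"
    by (rule ext, metis (full_types) bool.simps(3) bool.simps(4))
  have "indep_vars (\<lambda>_. borel) (case_bool X1 X2) UNIV"
    using assms unfolding indep_var_def ** .
  then show ?thesis
    apply (subst *)
    apply (subst indep_vars_nn_integral)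
    apply auto
    by (simp add: UNIV_bool mult.commute)
qed

lemma xi_meas:
  assumes "prob_space M" and indep: "prob_space.indep_vars M (\<lambda>_. count_space UNIV) (Xv xi J) UNIV"
  shows "xi i k n j \<in> measurable M (count_space UNIV)"
proof -
  interpret prob_space M by fact
  have "\<forall>x. Xv xi J x \<in> measurable M (count_space UNIV)"
    using indep unfolding indep_vars_def by auto
  from spec[OF this, of "Inl (i,k,n,j)"] show ?thesis by simp
qed

lemma GW_meas:
  assumes "\<And>n j. xi n j \<in> measurable M (count_space UNIV)"
  shows "GW xi n \<in> measurable M (count_space UNIV)"
proof (induction n)
  case 0 then show ?case by simp
next
  case (Suc n)
  have "(\<lambda>x. (\<lambda>g x. \<Sum>j<g. xi n j x) (GW xi n x) x) \<in> measurable M (count_space UNIV)"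
    apply (rule measurable_compose_countable[where f="\<lambda>g x. \<Sum>j<g. xi n j x" and g="GW xi n"])
     apply (rule sum_meas)
    using Suc assms by auto
  then show ?case by (simp add: fun_eq_iff)
qed

lemma gwP_restrict:
  assumes "\<And>m j. m < n \<Longrightarrow> Inl (i,k,m,j) \<in> K"
  shows "gwP i k n (restrict (\<lambda>y. Xv xi J y \<omega>) K) = GW (xi i k) n \<omega>"
  unfolding gwP_def by (rule GW_cong) (use assms in auto)

lemma indep_step:
  assumes "prob_space M" and indep: "prob_space.indep_vars M (\<lambda>_. count_space UNIV) (Xv xi J) UNIV"
  shows "(\<integral>\<^sup>+\<omega>. (if j < GW (xi i k) n \<omega> then 1 else 0) * ennreal (real (xi i k n j \<omega>)) \<partial>M)
       = (\<integral>\<^sup>+\<omega>. (if j < GW (xi i k) n \<omega> then 1 else 0) \<partial>M) * (\<integral>\<^sup>+\<omega>. ennreal (real (xi i k n j \<omega>)) \<partial>M)"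
proof -
  interpret prob_space M by fact
  define K :: "bool \<Rightarrow> ((nat \<times> nat \<times> nat \<times> nat) + nat) set" where "K = case_bool {Inl(i,k,m,j') | m j'. m<n} {Inl(i,k,n,j)}"
  have dj: "disjoint_family_on K UNIV"
    unfolding disjoint_family_on_def K_def by (auto split: bool.split)
  have iv: "indep_vars (\<lambda>b. PiM (K b) (\<lambda>_. count_space UNIV)) (\<lambda>b \<omega>. restrict (\<lambda>y. Xv xi J y \<omega>) (K b)) UNIV"
    by (rule indep_vars_restrict[OF indep]) (use dj in auto)
  have e1: "(\<lambda>b. PiM (K b) (\<lambda>_. count_space UNIV)) = case_bool (PiM (K True) (\<lambda>_. count_space UNIV)) (PiM (K False) (\<lambda>_. count_space UNIV))"
    by (rule ext) (simp split: bool.split)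
  have e2: "(\<lambda>b \<omega>. restrict (\<lambda>y. Xv xi J y \<omega>) (K b)) = case_bool (\<lambda>\<omega>. restrict (\<lambda>y. Xv xi J y \<omega>) (K True)) (\<lambda>\<omega>. restrict (\<lambda>y. Xv xi J y \<omega>) (K False))"
    by (rule ext) (simp split: bool.split)
  have iv2: "indep_var (PiM (K True) (\<lambda>_. count_space UNIV)) (\<lambda>\<omega>. restrict (\<lambda>y. Xv xi J y \<omega>) (K True))
                    (PiM (K False) (\<lambda>_. count_space UNIV)) (\<lambda>\<omega>. restrict (\<lambda>y. Xv xi J y \<omega>) (K False))"
    using iv unfolding indep_var_def e1 e2 .
  have m1: "(\<lambda>x. if j < gwP i k n x then 1 else (0::ennreal)) \<in> borel_measurable (PiM (K True) (\<lambda>_. count_space UNIV))"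
  proof -
    have "gwP i k n \<in> measurable (PiM (K True) (\<lambda>_. count_space UNIV)) (count_space UNIV)"
      by (rule gwP_meas) (auto simp: K_def)
    then show ?thesis by measurable
  qed
  have m2: "(\<lambda>x. ennreal (real (x (Inl(i,k,n,j))))) \<in> borel_measurable (PiM (K False) (\<lambda>_. count_space UNIV))"
  proof -
    have "(\<lambda>x. x (Inl(i,k,n,j))) \<in> measurable (PiM (K False) (\<lambda>_. count_space UNIV)) (count_space UNIV)"
      by (rule measurable_component_singleton) (auto simp: K_def)
    then show ?thesis by measurable
  qed
  note iv3 = indep_var_compose[OF iv2 m1 m2]
  have r1: "((\<lambda>x. if j < gwP i k n x then 1 else (0::ennreal)) \<circ> (\<lambda>\<omega>. restrict (\<lambda>y. Xv xi J y \<omega>) (K True)))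
      = (\<lambda>\<omega>. if j < GW (xi i k) n \<omega> then 1 else 0)"
    by (rule ext, simp only: comp_def, subst gwP_restrict) (auto simp: K_def)
  have r2: "((\<lambda>x. ennreal (real (x (Inl(i,k,n,j))))) \<circ> (\<lambda>\<omega>. restrict (\<lambda>y. Xv xi J y \<omega>) (K False)))
      = (\<lambda>\<omega>. ennreal (real (xi i k n j \<omega>)))"
    by (rule ext) (simp add: K_def)
  show ?thesis
    using indep_var_nn_integral[OF iv3[unfolded r1 r2]] .
qed


lemma suminf_ind_of_nat: "(\<Sum>j. (if j < (g::nat) then 1 else 0) * (of_nat (a j) :: ennreal)) = of_nat (\<Sum>j<g. a j)"
proof -
  have "(\<Sum>j. (if j < g then 1 else 0) * (of_nat (a j) :: ennreal)) = (\<Sum>j\<in>{..<g}. (if j < g then 1 else 0) * (of_nat (a j) :: ennreal))"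
    by (rule suminf_finite) auto
  also have "\<dots> = (\<Sum>j<g. of_nat (a j))" by simp
  finally show ?thesis by simp
qed

lemma GW_expect:
  assumes P: "prob_space M" and indep: "prob_space.indep_vars M (\<lambda>_. count_space UNIV) (Xv xi J) UNIV"
    and xm: "\<And>i k n j. (\<integral>\<^sup>+\<omega>. of_nat (xi i k n j \<omega>) \<partial>M) = (m::ennreal)"
  shows "(\<integral>\<^sup>+\<omega>. of_nat (GW (xi i k) n \<omega>) \<partial>M) = m ^ n"
proof (induction n)
  case 0
  interpret prob_space M by fact
  show ?case by (simp add: emeasure_space_1)
next
  case (Suc n)
  interpret prob_space M by fact
  have xme[measurable]: "\<And>i k n j. xi i k n j \<in> measurable M (count_space UNIV)"
    by (rule xi_meas[OF P indep])
  have gme[measurable]: "GW (xi i k) n \<in> measurable M (count_space UNIV)"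
    by (rule GW_meas) (rule xme)
  have "(\<integral>\<^sup>+\<omega>. of_nat (GW (xi i k) (Suc n) \<omega>) \<partial>M)
      = (\<integral>\<^sup>+\<omega>. (\<Sum>j. (if j < GW (xi i k) n \<omega> then 1 else 0) * (of_nat (xi i k n j \<omega>) :: ennreal)) \<partial>M)"
    by (simp only: suminf_ind_of_nat GW.simps)
  also have "\<dots> = (\<Sum>j. \<integral>\<^sup>+\<omega>. (if j < GW (xi i k) n \<omega> then 1 else 0) * (of_nat (xi i k n j \<omega>) :: ennreal) \<partial>M)"
    by (rule nn_integral_suminf) measurable
  also have "\<dots> = (\<Sum>j. (\<integral>\<^sup>+\<omega>. (if j < GW (xi i k) n \<omega> then 1 else 0) \<partial>M) * m)"
  proof (rule suminf_cong)
    fix j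
    show "(\<integral>\<^sup>+\<omega>. (if j < GW (xi i k) n \<omega> then 1 else 0) * (of_nat (xi i k n j \<omega>) :: ennreal) \<partial>M)
        = (\<integral>\<^sup>+\<omega>. (if j < GW (xi i k) n \<omega> then 1 else 0) \<partial>M) * m"
      using indep_step[OF P indep, of j i k n] xm[of i k n j]
      by (simp add: ennreal_of_nat_eq_real_of_nat)
  qed
  also have "\<dots> = (\<Sum>j. (\<integral>\<^sup>+\<omega>. (if j < GW (xi i k) n \<omega> then 1 else 0) \<partial>M)) * m"
    by simp
  also have "(\<Sum>j. (\<integral>\<^sup>+\<omega>. (if j < GW (xi i k) n \<omega> then 1 else 0) \<partial>M))
      = (\<integral>\<^sup>+\<omega>. (\<Sum>j. (if j < GW (xi i k) n \<omega> then 1 else 0) * (of_nat 1 :: ennreal)) \<partial>M)"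
  proof -
    have "(\<integral>\<^sup>+\<omega>. (\<Sum>j. (if j < GW (xi i k) n \<omega> then 1 else 0) * (of_nat 1 :: ennreal)) \<partial>M)
      = (\<Sum>j. (\<integral>\<^sup>+\<omega>. (if j < GW (xi i k) n \<omega> then 1 else 0) * (of_nat 1 :: ennreal) \<partial>M))"
      by (rule nn_integral_suminf) measurable
    then show ?thesis by simp
  qed
  also have "\<dots> = (\<integral>\<^sup>+\<omega>. of_nat (GW (xi i k) n \<omega>) \<partial>M)"
    by (simp only: suminf_ind_of_nat) simp
  finally show ?case using Suc by (simp add: mult.commute)
qed


lemma markov_real:
  fixes u :: "'a \<Rightarrow> real"
  assumes [measurable]: "u \<in> borel_measurable M" and a: "a > 0" and b: "b \<ge> 0"
    and I: "(\<integral>\<^sup>+x. ennreal (u x) \<partial>M) \<le> ennreal b"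
  shows "measure M {x\<in>space M. a < u x} \<le> b / a"
proof -
  have "emeasure M {x\<in>space M. 1 \<le> ennreal (1/a) * ennreal (u x)} \<le> ennreal (1/a) * (\<integral>\<^sup>+x. ennreal (u x) * indicator (space M) x \<partial>M)"
    by (rule nn_integral_Markov_inequality) auto
  also have "(\<integral>\<^sup>+x. ennreal (u x) * indicator (space M) x \<partial>M) = (\<integral>\<^sup>+x. ennreal (u x) \<partial>M)"
    by (rule nn_integral_cong) auto
  also have "ennreal (1/a) * (\<integral>\<^sup>+x. ennreal (u x) \<partial>M) \<le> ennreal (1/a) * ennreal b"
    using I by (rule mult_left_mono) simp
  also have "\<dots> = ennreal (b/a)" using a b by (simp add: ennreal_mult[symmetric])
  finally have 1: "emeasure M {x\<in>space M. 1 \<le> ennreal (1/a) * ennreal (u x)} \<le> ennreal (b/a)" .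
  have "{x\<in>space M. a < u x} \<subseteq> {x\<in>space M. 1 \<le> ennreal (1/a) * ennreal (u x)}"
  proof safe
    fix x assume "x \<in> space M" "a < u x"
    then have "1 \<le> u x / a" using a by simp
    then show "1 \<le> ennreal (1/a) * ennreal (u x)"
      using a \<open>a < u x\<close> by (simp add: ennreal_mult[symmetric] ennreal_1[symmetric] del: ennreal_1)
  qed
  then have "emeasure M {x\<in>space M. a < u x} \<le> ennreal (b/a)"
  proof -
    have "{x\<in>space M. 1 \<le> ennreal (1/a) * ennreal (u x)} \<in> sets M" by measurable
    then show ?thesis using 1 \<open>_ \<subseteq> _\<close> by (meson emeasure_mono order_trans)
  qed
  then show ?thesis unfolding measure_def
    by (intro enn2real_leI) (use a b in auto)
qed

lemma sum_poly_exp: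
  fixes d T :: real assumes "d > 0" "T > 0"
  shows "summable (\<lambda>n. (real n * T + 1)^2 * exp (- d * real n))"
proof -
  have "eventually (\<lambda>n. norm ((real n * T + 1)^2 * exp (- d * real n)) \<le> 1 / real n ^ 2) at_top"
  proof -
    have "(\<lambda>n. ((real n * T + 1)^2 * exp (- d * real n)) * real n ^ 2) \<longlonglongrightarrow> 0"
      using assms by real_asymp
    then have "eventually (\<lambda>n. ((real n * T + 1)^2 * exp (- d * real n)) * real n ^ 2 < 1) at_top"
      by (rule order_tendstoD) simp
    moreover have "eventually (\<lambda>n::nat. n \<ge> 1) at_top" by (rule eventually_ge_at_top)
    ultimately show ?thesis
      by eventually_elim (simp add: field_simps)
  qed
  moreover have "summable (\<lambda>n. 1 / real n ^ 2)"
    using inverse_power_summable[of 2, where 'a=real] by (simp add: divide_inverse)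
  ultimately show ?thesis
    by (rule summable_comparison_test_ev)
qed


lemma Y_nonneg: "0 \<le> Ytrunc xi J \<gamma> cn N \<omega>"
  unfolding Ytrunc_def by (intro sum_nonneg) (auto intro: sum_nonneg)

lemma Y_bound:
  "Ytrunc xi J \<gamma> cn N \<omega> \<le> (\<Sum>k\<in>{0..N}. \<Sum>i\<in>{1..nat \<lfloor>exp (\<gamma> * cn)\<rfloor>}. real (GW (xi i k) (N - k) \<omega>))"
  unfolding Ytrunc_def
proof (rule sum_mono)
  fix k assume "k \<in> {0..N}"
  show "(if real (J k \<omega>) \<le> exp (\<gamma> * cn) then real (\<Sum>i\<in>{1..J k \<omega>}. GW (xi i k) (N - k) \<omega>) else 0)
     \<le> (\<Sum>i\<in>{1..nat \<lfloor>exp (\<gamma> * cn)\<rfloor>}. real (GW (xi i k) (N - k) \<omega>))"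
  proof (cases "real (J k \<omega>) \<le> exp (\<gamma> * cn)")
    case True
    then have "int (J k \<omega>) \<le> \<lfloor>exp (\<gamma> * cn)\<rfloor>" by (simp add: le_floor_iff)
    then have "J k \<omega> \<le> nat \<lfloor>exp (\<gamma> * cn)\<rfloor>" by linarith
    then have "(\<Sum>i\<in>{1..J k \<omega>}. real (GW (xi i k) (N - k) \<omega>)) \<le> (\<Sum>i\<in>{1..nat \<lfloor>exp (\<gamma> * cn)\<rfloor>}. real (GW (xi i k) (N - k) \<omega>))"
      by (intro sum_mono2) auto
    then show ?thesis using True by simp
  next
    case False then show ?thesis by (simp add: sum_nonneg)
  qed
qed

lemma Y_meas:
  assumes [measurable]: "\<And>i k n j. xi i k n j \<in> measurable M (count_space UNIV)"
    and [measurable]: "\<And>k. J k \<in> measurable M (count_space UNIV)"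
  shows "Ytrunc xi J \<gamma> cn N \<in> borel_measurable M"
proof -
  have G[measurable]: "\<And>i k n. GW (xi i k) n \<in> measurable M (count_space UNIV)"
    by (rule GW_meas) simp
  have S[measurable]: "\<And>k n. (\<lambda>\<omega>. \<Sum>i\<in>{1..J k \<omega>}. GW (xi i k) n \<omega>) \<in> measurable M (count_space UNIV)"
  proof -
    fix k n
    show "(\<lambda>\<omega>. \<Sum>i\<in>{1..J k \<omega>}. GW (xi i k) n \<omega>) \<in> measurable M (count_space UNIV)"
      by (rule measurable_compose_countable[where f="\<lambda>g \<omega>. \<Sum>i\<in>{1..g}. GW (xi i k) n \<omega>" and g="J k"]) auto
  qed
  show ?thesis unfolding Ytrunc_def by measurable
qed

lemma Y_expect:
  assumes P: "prob_space M" 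
    and [measurable]: "\<And>i k n j. xi i k n j \<in> measurable M (count_space UNIV)"
    and Gexp: "\<And>i k n. (\<integral>\<^sup>+\<omega>. of_nat (GW (xi i k) n \<omega>) \<partial>M) = ennreal (\<mu> ^ n)"
    and mf: "mf \<ge> 0" and R0: "R \<ge> 0" and hyp: "\<And>k. k \<le> N \<Longrightarrow> mf * \<mu> ^ (N - k) \<le> R"
  shows "(\<integral>\<^sup>+\<omega>. ennreal (mf * Ytrunc xi J \<gamma> cn N \<omega>) \<partial>M)
       \<le> ennreal ((real N + 1) * real (nat \<lfloor>exp (\<gamma> * cn)\<rfloor>) * R)"
proof -
  define L where "L = nat \<lfloor>exp (\<gamma> * cn)\<rfloor>"
  have G[measurable]: "\<And>i k n. GW (xi i k) n \<in> measurable M (count_space UNIV)"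
    by (rule GW_meas) simp
  have "(\<integral>\<^sup>+\<omega>. ennreal (mf * Ytrunc xi J \<gamma> cn N \<omega>) \<partial>M)
     \<le> (\<integral>\<^sup>+\<omega>. (\<Sum>k\<in>{0..N}. \<Sum>i\<in>{1..L}. ennreal mf * of_nat (GW (xi i k) (N - k) \<omega>)) \<partial>M)"
  proof (rule nn_integral_mono)
    fix \<omega>
    have "mf * Ytrunc xi J \<gamma> cn N \<omega> \<le> mf * (\<Sum>k\<in>{0..N}. \<Sum>i\<in>{1..L}. real (GW (xi i k) (N - k) \<omega>))"
      using Y_bound[of xi J \<gamma> cn N \<omega>] mf unfolding L_def by (simp add: mult_left_mono)
    also have "\<dots> = (\<Sum>k\<in>{0..N}. \<Sum>i\<in>{1..L}. mf * real (GW (xi i k) (N - k) \<omega>))"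
      by (simp add: sum_distrib_left)
    finally have "ennreal (mf * Ytrunc xi J \<gamma> cn N \<omega>) \<le> ennreal (\<Sum>k\<in>{0..N}. \<Sum>i\<in>{1..L}. mf * real (GW (xi i k) (N - k) \<omega>))"
      by (rule ennreal_leI)
    also have "\<dots> = (\<Sum>k\<in>{0..N}. \<Sum>i\<in>{1..L}. ennreal mf * of_nat (GW (xi i k) (N - k) \<omega>))"
      using mf by (simp add: sum_nonneg ennreal_mult[symmetric] ennreal_of_nat_eq_real_of_nat)
    finally show "ennreal (mf * Ytrunc xi J \<gamma> cn N \<omega>) \<le> (\<Sum>k\<in>{0..N}. \<Sum>i\<in>{1..L}. ennreal mf * of_nat (GW (xi i k) (N - k) \<omega>))" .
  qed
  also have "\<dots> = (\<Sum>k\<in>{0..N}. \<Sum>i\<in>{1..L}. ennreal mf * ennreal (\<mu> ^ (N - k)))"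
    by (simp add: nn_integral_sum nn_integral_cmult Gexp)
  also have "\<dots> \<le> (\<Sum>k\<in>{0..N}. \<Sum>i\<in>{1..L}. ennreal R)"
  proof (intro sum_mono)
    fix k i assume "k \<in> {0..N}"
    then have "mf * \<mu> ^ (N - k) \<le> R" using hyp by auto
    then show "ennreal mf * ennreal (\<mu> ^ (N - k)) \<le> ennreal R"
      using mf by (metis ennreal_leI ennreal_mult' mult.commute ennreal_mult'' order_refl) 
  qed
  also have "\<dots> = ennreal ((real N + 1) * real L * R)"
  proof -
    have "(\<Sum>k\<in>{0..N}. \<Sum>i\<in>{1..L}. ennreal R) = of_nat (Suc N) * (of_nat L * ennreal R)" by simp
    also have "\<dots> = ennreal (real (Suc N)) * (ennreal (real L) * ennreal R)"
      by (simp only: ennreal_of_nat_eq_real_of_nat)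
    also have "\<dots> = ennreal ((real N + 1) * real L * R)"
      using R0 by (simp add: ennreal_mult[symmetric] mult.assoc del: of_nat_Suc)
    finally show ?thesis .
  qed
  finally show ?thesis unfolding L_def .
qed

lemma nat_floor_le: "0 \<le> (x::real) \<Longrightarrow> real (nat \<lfloor>x\<rfloor>) \<le> x"
  by (simp add: of_nat_nat)

lemma logp_meas[measurable]: "logp \<in> borel_measurable borel"
  unfolding logp_def by measurable

theorem lemma2:
  fixes M :: "'a measure"
    and xi :: "nat \<Rightarrow> nat \<Rightarrow> nat \<Rightarrow> nat \<Rightarrow> 'a \<Rightarrow> nat"
    and J :: "nat \<Rightarrow> 'a \<Rightarrow> nat"
    and \<mu> :: real and c :: "nat \<Rightarrow> real" and T \<gamma> \<delta> :: real
  assumes "prob_space M"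
    and indep: "prob_space.indep_vars M (\<lambda>_. count_space UNIV)
          (\<lambda>x \<omega>. case x of Inl (i, k, n, j) \<Rightarrow> xi i k n j \<omega> | Inr k \<Rightarrow> J k \<omega>)
          (UNIV :: ((nat \<times> nat \<times> nat \<times> nat) + nat) set)"
    and xi_ident: "\<And>i k n j. distr M (count_space UNIV) (xi i k n j)
                              = distr M (count_space UNIV) (xi 1 0 0 0)"
    and J_ident: "\<And>k. distr M (count_space UNIV) (J k) = distr M (count_space UNIV) (J 0)"
    and mean_int: "integrable M (\<lambda>\<omega>. real (xi 1 0 0 0 \<omega>))"
    and mean: "prob_space.expectation M (\<lambda>\<omega>. real (xi 1 0 0 0 \<omega>)) = \<mu>"
    and mu_pos: "\<mu> > 0"
    and c_pos: "\<And>n. n \<ge> 1 \<Longrightarrow> c n > 0"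
    and c_cases: "(\<forall>n\<ge>1. c n = real n) \<or> filterlim (\<lambda>n. c n / real n) at_top sequentially"
    and T_pos: "T > 0" and gamma_pos: "\<gamma> > 0" and delta_pos: "\<delta> > 0"
  defines "A \<equiv> \<lambda>n. {\<omega> \<in> space M. \<exists>t\<in>{0..T}.
              logp (mfun \<mu> c (nat \<lfloor>real n * t\<rfloor>)
                    * Ytrunc xi J \<gamma> (c n) (nat \<lfloor>real n * t\<rfloor>) \<omega>) / c n > \<gamma> + \<delta>}"
  shows "(\<forall>n. A n \<in> sets M) \<and> summable (\<lambda>n. measure M (A (Suc n)))"
proof -
  interpret prob_space M by fact
  note P = \<open>prob_space M\<close>
  have xme[measurable]: "\<And>i k n j. xi i k n j \<in> measurable M (count_space UNIV)"
    by (rule xi_meas[OF P indep])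
  have Jme[measurable]: "\<And>k. J k \<in> measurable M (count_space UNIV)"
  proof -
    fix k
    have "\<forall>x. Xv xi J x \<in> measurable M (count_space UNIV)"
      using indep unfolding indep_vars_def by auto
    from spec[OF this, of "Inr k"] show "J k \<in> measurable M (count_space UNIV)" by simp
  qed
  have xm: "\<And>i k n j. (\<integral>\<^sup>+\<omega>. of_nat (xi i k n j \<omega>) \<partial>M) = ennreal \<mu>"
  proof -
    fix i k n j
    have "(\<integral>\<^sup>+\<omega>. of_nat (xi i k n j \<omega>) \<partial>M) = (\<integral>\<^sup>+x. of_nat x \<partial>distr M (count_space UNIV) (xi i k n j))"
      by (subst nn_integral_distr) auto
    also have "\<dots> = (\<integral>\<^sup>+x. of_nat x \<partial>distr M (count_space UNIV) (xi 1 0 0 0))"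
      unfolding xi_ident[of i k n j] ..
    also have "\<dots> = (\<integral>\<^sup>+\<omega>. of_nat (xi 1 0 0 0 \<omega>) \<partial>M)"
      by (subst nn_integral_distr) auto
    also have "\<dots> = (\<integral>\<^sup>+\<omega>. ennreal (real (xi 1 0 0 0 \<omega>)) \<partial>M)"
      by (simp add: ennreal_of_nat_eq_real_of_nat)
    also have "\<dots> = ennreal \<mu>"
      using nn_integral_eq_integral[OF mean_int] mean by simp
    finally show "(\<integral>\<^sup>+\<omega>. of_nat (xi i k n j \<omega>) \<partial>M) = ennreal \<mu>" .
  qed
  have Gexp: "\<And>i k n. (\<integral>\<^sup>+\<omega>. of_nat (GW (xi i k) n \<omega>) \<partial>M) = ennreal (\<mu> ^ n)"
    using GW_expect[OF P indep xm] mu_pos by (simp add: ennreal_power)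
  define case1 where "case1 = (\<forall>n\<ge>1. c n = real n)"
  define \<rho> where "\<rho> = (if case1 then 1 else max 1 \<mu>)"
  have rho1: "\<rho> \<ge> 1" unfolding \<rho>_def by auto
  have mf0: "\<And>N. mfun \<mu> c N \<ge> 0"
    unfolding mfun_def using mu_pos by auto
  have mfb: "\<And>N k. k \<le> N \<Longrightarrow> mfun \<mu> c N * \<mu> ^ (N - k) \<le> \<rho> ^ N"
  proof -
    fix N k :: nat assume kN: "k \<le> N"
    show "mfun \<mu> c N * \<mu> ^ (N - k) \<le> \<rho> ^ N"
    proof (cases case1)
      case True
      then have mf: "mfun \<mu> c N = min (inverse \<mu> ^ N) 1" and r: "\<rho> = 1"
        unfolding mfun_def \<rho>_def case1_def by auto
      show ?thesis
      proof (cases "\<mu> \<ge> 1")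
        case True
        have e1: "inverse \<mu> ^ N * \<mu> ^ (N - k) = inverse \<mu> ^ k * (inverse \<mu> ^ (N-k) * \<mu> ^ (N-k))"
          using kN by (metis le_add_diff_inverse2 power_add mult.commute mult.assoc)
        have e2: "inverse \<mu> ^ (N-k) * \<mu> ^ (N-k) = 1"
          using mu_pos by (simp add: power_mult_distrib[symmetric])
        have "inverse \<mu> ^ k \<le> 1" using True by (intro power_le_one) (auto simp: inverse_le_1_iff)
        moreover have "mfun \<mu> c N * \<mu>^(N-k) \<le> inverse \<mu> ^ N * \<mu> ^ (N - k)"
          unfolding mf using mu_pos by (intro mult_right_mono) auto
        ultimately show ?thesis using r e1 e2 by simp
      next
        case False
        then have "\<mu>^(N-k) \<le> 1" using mu_pos by (intro power_le_one) auto
        moreover have "mfun \<mu> c N \<le> 1" unfolding mf by simp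
        ultimately show ?thesis using r mf0[of N] mu_pos by (simp add: mult_le_one)
      qed
    next
      case False
      then have mf: "mfun \<mu> c N = 1" and r: "\<rho> = max 1 \<mu>"
        unfolding mfun_def \<rho>_def case1_def by auto
      have "\<mu>^(N-k) \<le> (max 1 \<mu>)^(N-k)" using mu_pos by (intro power_mono) auto
      also have "\<dots> \<le> (max 1 \<mu>)^N" by (intro power_increasing) auto
      finally show ?thesis using mf r by simp
    qed
  qed
  define Nm where "Nm n = nat \<lfloor>real n * T\<rfloor>" for n :: nat
  define B where "B n N = {\<omega>\<in>space M. logp (mfun \<mu> c N * Ytrunc xi J \<gamma> (c n) N \<omega>) / c n > \<gamma> + \<delta>}" for n N :: nat
  have Bme: "\<And>n N. B n N \<in> sets M"
  proof -
    fix n N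
    have [measurable]: "Ytrunc xi J \<gamma> (c n) N \<in> borel_measurable M"
      by (rule Y_meas) auto
    show "B n N \<in> sets M" unfolding B_def by measurable
  qed
  have Nle: "\<And>n t. t \<in> {0..T} \<Longrightarrow> nat \<lfloor>real n * t\<rfloor> \<le> Nm n"
    unfolding Nm_def by (intro nat_mono floor_mono mult_left_mono) auto
  have Aeq: "\<And>n. A n = (\<Union>N\<in>{N. N \<le> Nm n \<and> (\<exists>t\<in>{0..T}. N = nat \<lfloor>real n * t\<rfloor>)}. B n N)"
    unfolding A_def B_def using Nle by blast
  have Ame: "\<And>n. A n \<in> sets M"
    unfolding Aeq by (intro sets.finite_UN) (auto simp: Bme)
  have PB: "\<And>n N. n \<ge> 1 \<Longrightarrow> measure M (B n N) \<le> (real N + 1) * \<rho> ^ N * exp (- \<delta> * c n)"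
  proof -
    fix n N :: nat assume n1: "n \<ge> 1"
    define cn where "cn = c n"
    have cn: "cn > 0" using c_pos n1 unfolding cn_def by auto
    define u where "u \<omega> = mfun \<mu> c N * Ytrunc xi J \<gamma> cn N \<omega>" for \<omega>
    have [measurable]: "Ytrunc xi J \<gamma> cn N \<in> borel_measurable M" by (rule Y_meas) auto
    have um[measurable]: "u \<in> borel_measurable M" unfolding u_def by measurable
    define a where "a = exp ((\<gamma>+\<delta>) * cn)"
    define L where "L = real (nat \<lfloor>exp (\<gamma> * cn)\<rfloor>)"
    have L: "L \<le> exp (\<gamma> * cn)" "0 \<le> L" unfolding L_def by (auto intro: nat_floor_le)
    have I: "(\<integral>\<^sup>+\<omega>. ennreal (u \<omega>) \<partial>M) \<le> ennreal ((real N + 1) * L * \<rho> ^ N)"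
      unfolding u_def L_def by (rule Y_expect[OF P xme Gexp mf0]) (use rho1 mfb in auto)
    have sub: "B n N \<subseteq> {\<omega>\<in>space M. a < u \<omega>}"
    proof safe
      fix \<omega> assume "\<omega> \<in> B n N"
      then have w: "\<omega> \<in> space M" "\<gamma> + \<delta> < logp (u \<omega>) / cn" unfolding B_def u_def cn_def by auto
      then have "(\<gamma>+\<delta>) * cn < logp (u \<omega>)" using cn by (simp add: pos_less_divide_eq)
      moreover have "0 < (\<gamma>+\<delta>) * cn" using cn gamma_pos delta_pos by simp
      ultimately have u1: "u \<omega> > 1" and u2: "(\<gamma>+\<delta>)*cn < ln (u \<omega>)" unfolding logp_def by (auto split: if_splits)
      have "a < exp (ln (u \<omega>))" unfolding a_def using u2 by simp
      then show "a < u \<omega>" using u1 by simp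
    qed (auto simp: B_def)
    have "measure M (B n N) \<le> measure M {\<omega>\<in>space M. a < u \<omega>}"
      by (rule finite_measure_mono[OF sub]) measurable
    also have "\<dots> \<le> ((real N + 1) * L * \<rho> ^ N) / a"
      by (rule markov_real[OF um _ _ I]) (use rho1 L in \<open>auto simp: a_def\<close>)
    also have "\<dots> \<le> (real N + 1) * \<rho> ^ N * exp (- \<delta> * c n)"
    proof -
      have "((real N + 1) * L * \<rho> ^ N) / a \<le> ((real N + 1) * exp (\<gamma> * cn) * \<rho> ^ N) / a"
        using L rho1 by (intro divide_right_mono mult_right_mono mult_left_mono) (auto simp: a_def)
      also have "\<dots> = (real N + 1) * \<rho> ^ N * exp (- \<delta> * c n)"
        unfolding a_def cn_def by (simp add: distrib_right exp_add exp_minus field_simps)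
      finally show ?thesis .
    qed
    finally show "measure M (B n N) \<le> (real N + 1) * \<rho> ^ N * exp (- \<delta> * c n)" .
  qed
  define b where "b n = (real n * T + 1)^2 * exp (real n * T * ln \<rho> - \<delta> * c n)" for n :: nat
  have PA: "\<And>n. n \<ge> 1 \<Longrightarrow> measure M (A n) \<le> b n"
  proof -
    fix n :: nat assume n1: "n \<ge> 1"
    have "measure M (A n) \<le> measure M (\<Union>N\<in>{..Nm n}. B n N)"
      by (rule finite_measure_mono) (auto simp: Aeq Bme)
    also have "\<dots> \<le> (\<Sum>N\<in>{..Nm n}. measure M (B n N))"
      by (rule finite_measure_subadditive_finite) (auto simp: Bme)
    also have "\<dots> \<le> (\<Sum>N\<in>{..Nm n}. (real (Nm n) + 1) * \<rho> ^ Nm n * exp (- \<delta> * c n))"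
    proof (rule sum_mono)
      fix N assume "N \<in> {..Nm n}"
      then have NN: "N \<le> Nm n" by simp
      have "measure M (B n N) \<le> (real N + 1) * \<rho> ^ N * exp (- \<delta> * c n)" by (rule PB[OF n1])
      also have "\<dots> \<le> (real (Nm n) + 1) * \<rho> ^ Nm n * exp (- \<delta> * c n)"
        using NN rho1 by (intro mult_right_mono mult_mono power_increasing) auto
      finally show "measure M (B n N) \<le> (real (Nm n) + 1) * \<rho> ^ Nm n * exp (- \<delta> * c n)" .
    qed
    also have "\<dots> = (real (Nm n) + 1)^2 * \<rho> ^ Nm n * exp (- \<delta> * c n)"
      by (simp add: power2_eq_square)
    also have "\<dots> \<le> b n"
    proof -
      have Nm: "real (Nm n) \<le> real n * T" unfolding Nm_def using T_pos by (intro nat_floor_le) simp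
      have 1: "(real (Nm n) + 1)^2 \<le> (real n * T + 1)^2" using Nm by (intro power_mono) auto
      have "\<rho> ^ Nm n = exp (real (Nm n) * ln \<rho>)" using rho1 by (simp add: exp_of_nat_mult)
      also have "\<dots> \<le> exp (real n * T * ln \<rho>)"
        using Nm rho1 by (simp add: mult_right_mono)
      finally have 2: "\<rho> ^ Nm n \<le> exp (real n * T * ln \<rho>)" .
      have "(real (Nm n) + 1)^2 * \<rho> ^ Nm n * exp (- \<delta> * c n) \<le> (real n * T + 1)^2 * exp (real n * T * ln \<rho>) * exp (- \<delta> * c n)"
        using 1 2 rho1 by (intro mult_right_mono mult_mono) auto
      also have "\<dots> = b n" unfolding b_def by (simp add: exp_diff exp_minus divide_inverse mult.assoc)
      finally show ?thesis .
    qed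
    finally show "measure M (A n) \<le> b n" .
  qed
  have sb: "summable (\<lambda>n. b (Suc n))"
  proof (cases case1)
    case True
    then have r: "\<rho> = 1" unfolding \<rho>_def by simp
    have eq: "\<And>n. b (Suc n) = (\<lambda>n. (real n * T + 1)^2 * exp (- \<delta> * real n)) (Suc n)"
      using True unfolding b_def case1_def r by simp
    have "summable (\<lambda>n. (\<lambda>n. (real n * T + 1)^2 * exp (- \<delta> * real n)) (Suc n))"
      by (subst summable_Suc_iff) (rule sum_poly_exp[OF delta_pos T_pos])
    then show ?thesis by (simp only: eq)
  next
    case False
    then have lim: "filterlim (\<lambda>n. c n / real n) at_top sequentially" using c_cases unfolding case1_def by auto
    define K where "K = (T * ln \<rho> + 1) / \<delta>"
    have ev: "eventually (\<lambda>n. K \<le> c n / real n) sequentially" using lim by (simp add: filterlim_at_top)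
    have "eventually (\<lambda>n. norm (b n) \<le> (real n * T + 1)^2 * exp (- 1 * real n)) sequentially"
      using ev eventually_ge_at_top[of 1]
    proof eventually_elim
      case (elim n)
      then have n0: "real n > 0" by simp
      have "K * real n \<le> c n" using elim n0 by (simp add: pos_le_divide_eq)
      then have "T * ln \<rho> * real n + real n \<le> \<delta> * c n" unfolding K_def using delta_pos by (simp add: field_simps)
      then have "real n * T * ln \<rho> - \<delta> * c n \<le> -1 * real n" by (simp add: algebra_simps)
      then show ?case unfolding b_def by (simp add: mult_left_mono)
    qed
    then have ev2: "eventually (\<lambda>n. norm (b (Suc n)) \<le> (\<lambda>n. (real n * T + 1)^2 * exp (- 1 * real n)) (Suc n)) sequentially"
      by (rule eventually_sequentially_Suc[THEN iffD2])
    have "summable (\<lambda>n. (\<lambda>n. (real n * T + 1)^2 * exp (- 1 * real n)) (Suc n))"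
      by (subst summable_Suc_iff) (rule sum_poly_exp, use T_pos in auto)
    then show ?thesis by (rule summable_comparison_test_ev[OF ev2])
  qed
  have "summable (\<lambda>n. measure M (A (Suc n)))"
    by (rule summable_comparison_test_ev[OF _ sb]) (use PA in auto)
  then show ?thesis using Ame by blast
qed

end
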